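(* Let $\alpha\in[0,2]$ and consider $\mathcal{B}_\alpha(6,3)$. Let $S_a=\{(2,2,2)',(3,3,0)',(3,0,3)',(0,3,3)',(4,1,1)',(1,4,1)',(1,1,4)'\}$ and $S_b=\{(4,2,0)',(4,0,2)',(2,4,0)',(2,0,4)',(0,4,2)',(0,2,4)'\}$, and let $\sigma$ be the mixed strategy with $\sigma(s)=1/10$ for $s\in S_a$, $\sigma(s)=1/20$ for $s\in S_b$, and $\sigma(s)=0$ otherwise. Then $\sigma$ induces uniform marginals (each battlefield's bid is uniform on $\{0,1,2,3,4\}$) and $\sigma$ is a symmetric equilibrium strategy of $\mathcal{B}_\alpha(6,3)$.
   Context: Fix integers $N\ge1$, $K\ge2$ and a real number $\alpha$. The Colonel Blotto game $\mathcal{B}_\alpha(N,K)$ is the two-player simultaneous-move game with players $A,B$, each with pure strategy set $S=\{s\in\{0,1,\ldots,N\}^K:\sum_{k=1}^K s_k=N\}$, in which the payoff of player $i$ at the pure profile $(s^i,s^{-i})$ is $\pi^i(s^i,s^{-i})=\sum_{k=1}^K\big(\mathbf 1[s^i_k>s^{-i}_k]+\tfrac{\alpha}{2}\mathbf 1[s^i_k=s^{-i}_k]\big)$. Mixed strategies are probability distributions on $S$, with expected payoffs under independent randomization. A symmetric equilibrium strategy is a mixed strategy $\sigma$ such that $(\sigma,\sigma)$ is a Nash equilibrium. When $K$ divides $N$ and $m=N/K$, $\sigma$ induces uniform marginals if for every battlefield $k$ the distribution of $s_k$ under $s\sim\sigma$ is uniform on $\{0,1,\ldots,2m\}$. *)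

theory Defs
  imports Complex_Main
begin

text \<open>Pure strategies of the Colonel Blotto game B_alpha(N,K): vectors in {0..N}^K
  summing to N, represented as lists of length K (battlefield k is index k, 0-based).\<close>
definition blotto_strats :: "nat \<Rightarrow> nat \<Rightarrow> nat list set" where
  "blotto_strats N K = {s. length s = K \<and> (\<forall>k<K. s ! k \<le> N) \<and> sum_list s = N}"

definition blotto_payoff :: "real \<Rightarrow> nat \<Rightarrow> nat list \<Rightarrow> nat list \<Rightarrow> real" where
  "blotto_payoff \<alpha> K s t =
     (\<Sum>k<K. (if s ! k > t ! k then 1 else 0) + \<alpha> / 2 * (if s ! k = t ! k then 1 else 0))"

definition mixed_strategy :: "nat \<Rightarrow> nat \<Rightarrow> (nat list \<Rightarrow> real) \<Rightarrow> bool" where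
  "mixed_strategy N K \<sigma> \<longleftrightarrow>
     (\<forall>s. 0 \<le> \<sigma> s) \<and> (\<forall>s. s \<notin> blotto_strats N K \<longrightarrow> \<sigma> s = 0) \<and>
     (\<Sum>s\<in>blotto_strats N K. \<sigma> s) = 1"

definition expected_payoff ::
  "real \<Rightarrow> nat \<Rightarrow> nat \<Rightarrow> (nat list \<Rightarrow> real) \<Rightarrow> (nat list \<Rightarrow> real) \<Rightarrow> real" where
  "expected_payoff \<alpha> N K \<sigma> \<tau> =
     (\<Sum>s\<in>blotto_strats N K. \<Sum>t\<in>blotto_strats N K. \<sigma> s * \<tau> t * blotto_payoff \<alpha> K s t)"

definition nash_equilibrium ::
  "real \<Rightarrow> nat \<Rightarrow> nat \<Rightarrow> (nat list \<Rightarrow> real) \<Rightarrow> (nat list \<Rightarrow> real) \<Rightarrow> bool" where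
  "nash_equilibrium \<alpha> N K \<sigma>A \<sigma>B \<longleftrightarrow>
     mixed_strategy N K \<sigma>A \<and> mixed_strategy N K \<sigma>B \<and>
     (\<forall>\<tau>. mixed_strategy N K \<tau> \<longrightarrow>
        expected_payoff \<alpha> N K \<tau> \<sigma>B \<le> expected_payoff \<alpha> N K \<sigma>A \<sigma>B) \<and>
     (\<forall>\<tau>. mixed_strategy N K \<tau> \<longrightarrow>
        expected_payoff \<alpha> N K \<tau> \<sigma>A \<le> expected_payoff \<alpha> N K \<sigma>B \<sigma>A)"

definition symmetric_equilibrium :: "real \<Rightarrow> nat \<Rightarrow> nat \<Rightarrow> (nat list \<Rightarrow> real) \<Rightarrow> bool" where
  "symmetric_equilibrium \<alpha> N K \<sigma> \<longleftrightarrow> nash_equilibrium \<alpha> N K \<sigma> \<sigma>"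

definition uniform_marginals :: "nat \<Rightarrow> nat \<Rightarrow> (nat list \<Rightarrow> real) \<Rightarrow> bool" where
  "uniform_marginals N K \<sigma> \<longleftrightarrow>
     K dvd N \<and>
     (\<forall>k<K. \<forall>v. (\<Sum>s\<in>{s\<in>blotto_strats N K. s ! k = v}. \<sigma> s) =
                 (if v \<le> 2 * (N div K) then 1 / real (2 * (N div K) + 1) else 0))"

end

theory Submission
  imports Defs
begin

definition L6 :: "nat list list" where
 "L6 = [[a,b,6-a-b]. a <- [0..<7], b <- [0..<7-a]]"

lemma L6e: "L6 = [[0,0,6],[0,1,5],[0,2,4],[0,3,3],[0,4,2],[0,5,1],[0,6,0],
     [1,0,5],[1,1,4],[1,2,3],[1,3,2],[1,4,1],[1,5,0],
     [2,0,4],[2,1,3],[2,2,2],[2,3,1],[2,4,0],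
     [3,0,3],[3,1,2],[3,2,1],[3,3,0],
     [4,0,2],[4,1,1],[4,2,0],[5,0,1],[5,1,0],[6,0,0]]"
  by (simp add: L6_def upt_rec)

lemma strats63: "blotto_strats 6 3 = set L6"
proof -
  have "s \<in> blotto_strats 6 3 \<longleftrightarrow> s \<in> set L6" for s
  proof
    assume "s \<in> blotto_strats 6 3"
    then have l: "length s = 3" and sm: "sum_list s = 6" by (auto simp: blotto_strats_def)
    from l obtain a b c where s: "s = [a,b,c]"
      by (auto simp: numeral_3_eq_3 length_Suc_conv)
    from sm s have "a + b + c = 6" by simp
    then have "a < 7" "b < 7 - a" "c = 6 - a - b" by auto
    then show "s \<in> set L6" unfolding L6_def s by (auto intro!: bexI[of _ a] image_eqI[of _ _ b])
  next
    assume "s \<in> set L6"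
    then show "s \<in> blotto_strats 6 3"
      by (auto simp: L6_def blotto_strats_def less_Suc_eq numeral_3_eq_3)
  qed
  then show ?thesis by blast
qed

lemma payoff3: "blotto_payoff \<alpha> 3 s t =
   ((if s!0 > t!0 then 1 else 0) + \<alpha>/2 * (if s!0 = t!0 then 1 else 0)) +
   ((if s!1 > t!1 then 1 else 0) + \<alpha>/2 * (if s!1 = t!1 then 1 else 0)) +
   ((if s!2 > t!2 then 1 else 0) + \<alpha>/2 * (if s!2 = t!2 then 1 else 0))"
  by (simp add: blotto_payoff_def numeral_3_eq_3 lessThan_Suc numeral_2_eq_2)

definition "La = [[2,2,2], [3,3,0], [3,0,3], [0,3,3], [4,1,1], [1,4,1], [1,1,4::nat]]"
definition "Lb = [[4,2,0], [4,0,2], [2,4,0], [2,0,4], [0,4,2], [0,2,4::nat]]"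
definition "G \<alpha> s = sum_list (map (\<lambda>t. 1/10 * blotto_payoff \<alpha> 3 s t) La)
   + sum_list (map (\<lambda>t. 1/20 * blotto_payoff \<alpha> 3 s t) Lb)"

lemma Gle: "(0::real) \<le> \<alpha> \<Longrightarrow> \<forall>s \<in> set L6. G \<alpha> s \<le> 6/5 + 3*\<alpha>/10"
  unfolding L6e list.set ball_simps
  apply (simp only: G_def La_def Lb_def list.map sum_list_simps payoff3 nth_Cons_0 nth_Cons_numeral nth_Cons_Suc)
  apply simp
  apply (simp add: field_simps)
  done

lemma Geq: "\<forall>s \<in> set La \<union> set Lb. G \<alpha> s = 6/5 + 3*\<alpha>/10"
  unfolding La_def Lb_def set_append[symmetric] append.simps list.set ball_simps
  apply (simp only: G_def La_def Lb_def list.map sum_list_simps payoff3 nth_Cons_0 nth_Cons_numeral nth_Cons_Suc)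
  apply simp
  apply (simp add: field_simps)
  done

lemma distLa: "distinct La" by (simp add: La_def)
lemma distLb: "distinct Lb" by (simp add: Lb_def)
lemma distL6: "distinct L6" by (simp add: L6e)
lemma disjab: "set La \<inter> set Lb = {}" by (simp add: La_def Lb_def)
lemma subab: "set La \<union> set Lb \<subseteq> set L6" by (simp add: La_def Lb_def L6e)

theorem mainTheorem10:
  fixes \<alpha> :: real and \<sigma> :: "nat list \<Rightarrow> real"
  assumes "0 \<le> \<alpha>" and "\<alpha> \<le> 2"
  defines "Sa \<equiv> {[2,2,2], [3,3,0], [3,0,3], [0,3,3], [4,1,1], [1,4,1], [1,1,4]} :: nat list set"
      and "Sb \<equiv> {[4,2,0], [4,0,2], [2,4,0], [2,0,4], [0,4,2], [0,2,4]} :: nat list set"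
  assumes "\<And>s. \<sigma> s = (if s \<in> Sa then 1/10 else if s \<in> Sb then 1/20 else 0)"
  shows "uniform_marginals 6 3 \<sigma> \<and> symmetric_equilibrium \<alpha> 6 3 \<sigma>"
proof -
  have SaL: "Sa = set La" by (simp add: Sa_def La_def)
  have SbL: "Sb = set Lb" by (simp add: Sb_def Lb_def)
  have sig: "\<sigma> s = (if s \<in> set La then 1/10 else if s \<in> set Lb then 1/20 else 0)" for s
    using assms(5) by (simp add: SaL SbL)
  have sumL: "(\<Sum>s\<in>blotto_strats 6 3. h s) = sum_list (map h L6)" for h :: "nat list \<Rightarrow> real"
    by (simp add: strats63 sum_list_distinct_conv_sum_set[OF distL6])
  have outside: "s \<notin> blotto_strats 6 3 \<Longrightarrow> \<sigma> s = 0" for s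
    using subab by (auto simp: sig strats63)
  have nonneg: "0 \<le> \<sigma> s" for s by (simp add: sig)
  have total: "(\<Sum>s\<in>blotto_strats 6 3. \<sigma> s) = 1"
    by (simp add: sumL L6e sig La_def Lb_def)
  have ms: "mixed_strategy 6 3 \<sigma>"
    using nonneg outside total by (simp add: mixed_strategy_def)
  define V where "V = 6/5 + 3*\<alpha>/10"
  define F where "F s = (\<Sum>t\<in>blotto_strats 6 3. \<sigma> t * blotto_payoff \<alpha> 3 s t)" for s
  have FG: "F s = G \<alpha> s" for s
  proof -
    have "F s = (\<Sum>t\<in>set La \<union> set Lb. \<sigma> t * blotto_payoff \<alpha> 3 s t)"
      unfolding F_def
    proof (rule sum.mono_neutral_right)
      show "finite (blotto_strats 6 3)" by (simp add: strats63)
      show "set La \<union> set Lb \<subseteq> blotto_strats 6 3" using subab by (simp add: strats63)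
      show "\<forall>i\<in>blotto_strats 6 3 - (set La \<union> set Lb). \<sigma> i * blotto_payoff \<alpha> 3 s i = 0"
      proof
        fix i assume "i \<in> blotto_strats 6 3 - (set La \<union> set Lb)"
        then have "\<sigma> i = 0" unfolding sig by auto
        then show "\<sigma> i * blotto_payoff \<alpha> 3 s i = 0" by simp
      qed
    qed
    also have "\<dots> = (\<Sum>t\<in>set La. \<sigma> t * blotto_payoff \<alpha> 3 s t) + (\<Sum>t\<in>set Lb. \<sigma> t * blotto_payoff \<alpha> 3 s t)"
      by (rule sum.union_disjoint) (use disjab in auto)
    also have "(\<Sum>t\<in>set La. \<sigma> t * blotto_payoff \<alpha> 3 s t) = (\<Sum>t\<in>set La. 1/10 * blotto_payoff \<alpha> 3 s t)"
      by (rule sum.cong) (auto simp: sig)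
    also have "(\<Sum>t\<in>set Lb. \<sigma> t * blotto_payoff \<alpha> 3 s t) = (\<Sum>t\<in>set Lb. 1/20 * blotto_payoff \<alpha> 3 s t)"
      by (rule sum.cong) (use disjab in \<open>auto simp: sig\<close>)
    finally show ?thesis
      by (simp add: G_def sum_list_distinct_conv_sum_set[OF distLa] sum_list_distinct_conv_sum_set[OF distLb])
  qed
  have Fle: "F s \<le> V" if "s \<in> blotto_strats 6 3" for s
    using Gle[OF assms(1)] that by (simp add: FG V_def strats63)
  have Feq: "F s = V" if "s \<in> set La \<union> set Lb" for s
    using Geq that by (simp add: FG V_def)
  have EP: "expected_payoff \<alpha> 6 3 \<tau> \<sigma> = (\<Sum>s\<in>blotto_strats 6 3. \<tau> s * F s)" for \<tau>
    unfolding expected_payoff_def F_def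
    by (simp add: sum_distrib_left mult.assoc mult.left_commute)
  have Eself: "expected_payoff \<alpha> 6 3 \<sigma> \<sigma> = V"
  proof -
    have "expected_payoff \<alpha> 6 3 \<sigma> \<sigma> = (\<Sum>s\<in>blotto_strats 6 3. \<sigma> s * V)"
      unfolding EP
    proof (rule sum.cong)
      fix s assume "s \<in> blotto_strats 6 3"
      show "\<sigma> s * F s = \<sigma> s * V"
      proof (cases "s \<in> set La \<union> set Lb")
        case True then show ?thesis by (simp add: Feq)
      next
        case False then have "\<sigma> s = 0" unfolding sig by auto
        then show ?thesis by simp
      qed
    qed simp
    also have "\<dots> = V" by (simp add: sum_distrib_right[symmetric] total)
    finally show ?thesis .
  qed
  have best: "expected_payoff \<alpha> 6 3 \<tau> \<sigma> \<le> expected_payoff \<alpha> 6 3 \<sigma> \<sigma>"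
    if "mixed_strategy 6 3 \<tau>" for \<tau>
  proof -
    have "expected_payoff \<alpha> 6 3 \<tau> \<sigma> \<le> (\<Sum>s\<in>blotto_strats 6 3. \<tau> s * V)"
      unfolding EP
      by (rule sum_mono, rule mult_left_mono) (use that Fle in \<open>auto simp: mixed_strategy_def\<close>)
    also have "\<dots> = V" using that by (simp add: sum_distrib_right[symmetric] mixed_strategy_def)
    finally show ?thesis using Eself by simp
  qed
  have eq: "symmetric_equilibrium \<alpha> 6 3 \<sigma>"
    using ms best by (simp add: symmetric_equilibrium_def nash_equilibrium_def)
  have um: "uniform_marginals 6 3 \<sigma>"
    unfolding uniform_marginals_def
  proof (intro conjI allI impI)
    show "(3::nat) dvd 6" by simp
    fix k :: nat and v :: nat assume k: "k < 3"
    have "(\<Sum>s\<in>{s\<in>blotto_strats 6 3. s ! k = v}. \<sigma> s) =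
          (\<Sum>s\<in>blotto_strats 6 3. if s ! k = v then \<sigma> s else 0)"
      by (simp add: sum.inter_filter strats63)
    also have "\<dots> = sum_list (map (\<lambda>s. if s ! k = v then \<sigma> s else 0) L6)"
      by (rule sumL)
    also have "\<dots> = (if v \<le> 4 then 1/5 else 0)"
    proof (cases "v \<le> 4")
      case True
      then have "v = 0 \<or> v = 1 \<or> v = 2 \<or> v = 3 \<or> v = 4" by auto
      moreover have "k = 0 \<or> k = 1 \<or> k = 2" using k by auto
      ultimately show ?thesis
        by (elim disjE; simp add: L6e sig La_def Lb_def)
    next
      case False
      moreover have "k = 0 \<or> k = 1 \<or> k = 2" using k by auto
      ultimately show ?thesis
        by (elim disjE; simp add: L6e sig La_def Lb_def)
    qed
    finally show "(\<Sum>s\<in>{s\<in>blotto_strats 6 3. s ! k = v}. \<sigma> s) =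
       (if v \<le> 2 * (6 div 3) then 1 / real (2 * (6 div 3) + 1) else 0)" by simp
  qed
  show ?thesis using um eq by simp
qed

end
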